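(* For every positive integer $n$, the map sending a minimal cover $\{S_1,\dots,S_k\}$ of $[n]$ to the undirected graph on $[n]$ in which distinct $v,w$ are adjacent iff $v,w\in S_i$ for some $i$, is a bijection from the set of minimal covers of $[n]$ onto the set of UEC-representatives on vertex set $[n]$.
   Context: A minimal cover of a finite set $S$ is a collection $\{S_1,\dots,S_k\}$ of nonempty subsets of $S$ such that for $T\subseteq[k]$ we have $\bigcup_{i\in T}S_i=S$ iff $T=[k]$. For a DAG $\mathcal{D}$, a trek is a path with no repeated vertices and no collider; the unconditional dependence graph $\mathcal{U}^\mathcal{D}$ is the undirected graph on the nodes of $\mathcal{D}$ in which distinct $v,w$ are adjacent iff there is a trek between them. An undirected graph on $[n]$ is a UEC-representative if it equals $\mathcal{U}^\mathcal{D}$ for some DAG $\mathcal{D}$ on $[n]$. *)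

theory Defs
  imports Main
begin

definition minimal_cover :: "'a set \<Rightarrow> 'a set set \<Rightarrow> bool" where
  "minimal_cover S C \<longleftrightarrow>
     (\<forall>A\<in>C. A \<noteq> {} \<and> A \<subseteq> S) \<and>
     (\<forall>T. T \<subseteq> C \<longrightarrow> (\<Union>T = S \<longleftrightarrow> T = C))"

text \<open>Undirected graphs on a fixed vertex set are represented by their edge sets,
  each edge being a two-element set {v,w}.\<close>
definition cover_graph :: "'a set set \<Rightarrow> 'a set set" where
  "cover_graph C = {{v, w} | v w. v \<noteq> w \<and> (\<exists>A\<in>C. v \<in> A \<and> w \<in> A)}"

definition dag_on :: "'a set \<Rightarrow> ('a \<times> 'a) set \<Rightarrow> bool" where
  "dag_on V D \<longleftrightarrow> D \<subseteq> V \<times> V \<and> acyclic D"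

definition is_trek :: "('a \<times> 'a) set \<Rightarrow> 'a list \<Rightarrow> bool" where
  "is_trek D p \<longleftrightarrow> p \<noteq> [] \<and> distinct p \<and>
     (\<forall>i. Suc i < length p \<longrightarrow> (p!i, p!Suc i) \<in> D \<or> (p!Suc i, p!i) \<in> D) \<and>
     (\<forall>i. 0 < i \<and> Suc i < length p \<longrightarrow>
          \<not> ((p!(i - 1), p!i) \<in> D \<and> (p!Suc i, p!i) \<in> D))"

definition trek_between :: "('a \<times> 'a) set \<Rightarrow> 'a \<Rightarrow> 'a \<Rightarrow> bool" where
  "trek_between D v w \<longleftrightarrow> (\<exists>p. is_trek D p \<and> hd p = v \<and> last p = w)"

definition udg :: "'a set \<Rightarrow> ('a \<times> 'a) set \<Rightarrow> 'a set set" where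
  "udg V D = {{v, w} | v w. v \<in> V \<and> w \<in> V \<and> v \<noteq> w \<and> trek_between D v w}"

definition UEC_representative :: "nat \<Rightarrow> nat set set \<Rightarrow> bool" where
  "UEC_representative n G \<longleftrightarrow> (\<exists>D. dag_on {1..n} D \<and> G = udg {1..n} D)"

end

theory Submission imports Defs begin

definition dpath :: "('a \<times> 'a) set \<Rightarrow> (nat \<Rightarrow> 'a) \<Rightarrow> nat \<Rightarrow> bool" where
  "dpath D f m \<longleftrightarrow> (\<forall>i<m. (f i, f (Suc i)) \<in> D)"

lemma dpath_trancl:
  assumes "dpath D f m" "i + Suc d \<le> m"
  shows "(f i, f (i + Suc d)) \<in> D\<^sup>+"
  using assms(2)
proof (induction d)
  case 0 then show ?case using assms(1) by (auto simp: dpath_def)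
next
  case (Suc d)
  then have "(f i, f (i + Suc d)) \<in> D\<^sup>+" by simp
  moreover have "(f (i + Suc d), f (Suc (i + Suc d))) \<in> D" using assms(1) Suc.prems by (auto simp: dpath_def)
  ultimately show ?case by simp
qed

lemma dpath_inj:
  assumes "acyclic D" "dpath D f m" "i \<le> m" "j \<le> m" "f i = f j"
  shows "i = j"
proof (rule ccontr)
  assume "i \<noteq> j"
  then have "i < j \<or> j < i" by arith
  then obtain a b where ab: "a < b" "b \<le> m" "f a = f b"
  proof
    assume "i < j" then show ?thesis using that[of i j] assms by simp
  next
    assume "j < i" then show ?thesis using that[of j i] assms by simp
  qed
  obtain d where "b = a + Suc d" using less_imp_Suc_add[OF ab(1)] by auto
  note bd = this
  have "(f a, f (a + Suc d)) \<in> D\<^sup>+" by (rule dpath_trancl[OF assms(2)]) (use ab bd in simp)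
  then have "(f a, f a) \<in> D\<^sup>+" using ab(3) bd by simp
  with assms(1) show False by (simp add: acyclic_def)
qed

lemma rtrancl_dpath:
  assumes "(a, b) \<in> D\<^sup>*" shows "\<exists>f m. f 0 = a \<and> f m = b \<and> dpath D f m"
  using assms unfolding rtrancl_power relpow_fun_conv dpath_def by blast

lemma dpath_shift: "dpath D f m \<Longrightarrow> i \<le> m \<Longrightarrow> dpath D (\<lambda>l. f (i + l)) (m - i)"
  by (auto simp: dpath_def)

lemma trek_imp_ca:
  assumes "is_trek D p"
  shows "\<exists>t. (t, hd p) \<in> D\<^sup>* \<and> (t, last p) \<in> D\<^sup>*"
proof -
  have ne: "p \<noteq> []" and adj: "\<And>i. Suc i < length p \<Longrightarrow> (p!i, p!Suc i) \<in> D \<or> (p!Suc i, p!i) \<in> D"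
    and nc: "\<And>i. 0 < i \<Longrightarrow> Suc i < length p \<Longrightarrow> \<not> ((p!(i - 1), p!i) \<in> D \<and> (p!Suc i, p!i) \<in> D)"
    using assms by (auto simp: is_trek_def)
  have inv: "(p!l, p!0) \<in> D\<^sup>* \<or> (\<exists>t. (t, p!0) \<in> D\<^sup>* \<and> (t, p!l) \<in> D\<^sup>* \<and> l \<ge> 1 \<and> (p!(l-1), p!l) \<in> D)"
    if "l < length p" for l
    using that
  proof (induction l)
    case 0 then show ?case by simp
  next
    case (Suc l)
    then have IH: "(p!l, p!0) \<in> D\<^sup>* \<or> (\<exists>t. (t, p!0) \<in> D\<^sup>* \<and> (t, p!l) \<in> D\<^sup>* \<and> l \<ge> 1 \<and> (p!(l-1), p!l) \<in> D)" by simp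
    from adj[OF Suc.prems] show ?case
    proof
      assume e: "(p!l, p!Suc l) \<in> D"
      from IH show ?case
      proof
        assume "(p!l, p!0) \<in> D\<^sup>*" then show ?case using e by auto
      next
        assume "\<exists>t. (t, p!0) \<in> D\<^sup>* \<and> (t, p!l) \<in> D\<^sup>* \<and> l \<ge> 1 \<and> (p!(l-1), p!l) \<in> D"
        then obtain t where "(t, p!0) \<in> D\<^sup>*" "(t, p!l) \<in> D\<^sup>*" by blast
        moreover have "(t, p!Suc l) \<in> D\<^sup>*" using calculation(2) e by (rule rtrancl_into_rtrancl)
        ultimately show ?case using e by auto
      qed
    next
      assume e: "(p!Suc l, p!l) \<in> D"
      from IH show ?case
      proof
        assume "(p!l, p!0) \<in> D\<^sup>*" then show ?case using e by (meson converse_rtrancl_into_rtrancl)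
      next
        assume "\<exists>t. (t, p!0) \<in> D\<^sup>* \<and> (t, p!l) \<in> D\<^sup>* \<and> l \<ge> 1 \<and> (p!(l-1), p!l) \<in> D"
        then have "0 < l" "(p!(l-1), p!l) \<in> D" by auto
        with nc[OF _ Suc.prems] e show ?case by blast
      qed
    qed
  qed
  have "length p - 1 < length p" using ne by simp
  from inv[OF this] have "\<exists>t. (t, p!0) \<in> D\<^sup>* \<and> (t, p!(length p - 1)) \<in> D\<^sup>*"
  proof
    assume "(p ! (length p - 1), p ! 0) \<in> D\<^sup>*"
    then show ?thesis using rtrancl_refl by blast
  qed blast
  then obtain t where "(t, p!0) \<in> D\<^sup>*" "(t, p!(length p - 1)) \<in> D\<^sup>*" by blast
  moreover have "hd p = p ! 0" using ne by (rule hd_conv_nth)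
  moreover have "last p = p ! (length p - 1)" using ne by (rule last_conv_nth)
  ultimately show ?thesis by (intro exI[of _ t]) simp
qed


lemma acyc_2cycle: "acyclic D \<Longrightarrow> (a, b) \<in> D \<Longrightarrow> (b, a) \<in> D \<Longrightarrow> False"
  by (meson acyclic_def r_into_trancl' trancl_into_trancl2)

lemma ca_imp_trek:
  assumes acyc: "acyclic D" and tv: "(t0, v) \<in> D\<^sup>*" and tw: "(t0, w) \<in> D\<^sup>*"
  shows "trek_between D v w"
proof -
  define P where "P N \<longleftrightarrow> (\<exists>f g m k. m + k = N \<and> f 0 = g 0 \<and> f m = v \<and> g k = w \<and> dpath D f m \<and> dpath D g k)" for N
  obtain f1 m1 where "f1 0 = t0" "f1 m1 = v" "dpath D f1 m1" using rtrancl_dpath[OF tv] by blast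
  moreover obtain g1 k1 where "g1 0 = t0" "g1 k1 = w" "dpath D g1 k1" using rtrancl_dpath[OF tw] by blast
  ultimately have "P (m1 + k1)" unfolding P_def
    by (intro exI[of _ f1] exI[of _ g1] exI[of _ m1] exI[of _ k1]) simp
  then have PL: "P (LEAST N. P N)" by (rule LeastI)
  then obtain f g m k where fg: "m + k = (LEAST N. P N)" "f 0 = g 0" "f m = v" "g k = w" "dpath D f m" "dpath D g k"
    unfolding P_def by blast
  have minim: "i = 0 \<and> j = 0" if "i \<le> m" "j \<le> k" "f i = g j" for i j
  proof (rule ccontr)
    assume "\<not> (i = 0 \<and> j = 0)"
    then have lt: "(m - i) + (k - j) < (LEAST N. P N)" using that fg(1) by linarith
    have "P ((m - i) + (k - j))" unfolding P_def
      apply (rule exI[of _ "\<lambda>l. f (i + l)"], rule exI[of _ "\<lambda>l. g (j + l)"])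
      apply (rule exI[of _ "m - i"], rule exI[of _ "k - j"])
      using that fg dpath_shift[OF fg(5) that(1)] dpath_shift[OF fg(6) that(2)] by auto
    with lt show False using not_less_Least by blast
  qed
  define h where "h l = (if l \<le> m then f (m - l) else g (l - m))" for l
  define p where "p = map h [0..<m+k+1]"
  have len: "length p = m + k + 1" by (simp add: p_def)
  have pn: "p ! l = h l" if "l < m + k + 1" for l using that by (simp add: p_def del: upt_Suc)
  have injh: "a = b" if "a < m + k + 1" "b < m + k + 1" "h a = h b" for a b
  proof -
    { fix a b assume a: "a \<le> m" and b: "\<not> b \<le> m" "b < m + k + 1" and e: "f (m - a) = g (b - m)"
      have "b - m \<le> k" using b by linarith
      then have False using minim[of "m - a" "b - m"] a b e by auto }
    note cross = this
    show ?thesis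
    proof (cases "a \<le> m"; cases "b \<le> m")
      assume "a \<le> m" "b \<le> m" then show ?thesis using dpath_inj[OF acyc fg(5), of "m - a" "m - b"] that by (auto simp: h_def)
    next
      assume "a \<le> m" "\<not> b \<le> m" then show ?thesis using cross[of a b] that by (auto simp: h_def)
    next
      assume "\<not> a \<le> m" "b \<le> m" then show ?thesis using cross[of b a] that by (auto simp: h_def)
    next
      assume "\<not> a \<le> m" "\<not> b \<le> m" then show ?thesis using dpath_inj[OF acyc fg(6), of "a - m" "b - m"] that by (auto simp: h_def) linarith+
    qed
  qed
  have edge_back: "(h (Suc l), h l) \<in> D" if "l < m" for l
    using fg(5) that by (auto simp: h_def dpath_def Suc_diff_Suc[symmetric])
  have edge_fwd: "(h l, h (Suc l)) \<in> D" if "m \<le> l" "l < m + k" for l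
  proof (cases "l = m")
    case True then show ?thesis using fg(2,6) that by (auto simp: h_def dpath_def)
  next
    case False then show ?thesis using fg(6) that by (auto simp: h_def dpath_def Suc_diff_le)
  qed
  have "is_trek D p"
    unfolding is_trek_def
  proof (intro conjI allI impI)
    show "p \<noteq> []" using len by auto
    show "distinct p" unfolding p_def distinct_map using injh by (auto simp: inj_on_def)
  next
    fix i assume i: "Suc i < length p"
    show "(p!i, p!Suc i) \<in> D \<or> (p!Suc i, p!i) \<in> D"
      using edge_back[of i] edge_fwd[of i] i len pn[of i] pn[of "Suc i"] by (cases "i < m") auto
  next
    fix i assume i: "0 < i \<and> Suc i < length p"
    show "\<not> ((p!(i - 1), p!i) \<in> D \<and> (p!Suc i, p!i) \<in> D)"
    proof (cases "i < m")
      case True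
      have "(h i, h (i - 1)) \<in> D" using edge_back[of "i - 1"] True i by simp
      then show ?thesis using acyc_2cycle[OF acyc] i len pn[of i] pn[of "i - 1"] by auto
    next
      case False
      have "(h i, h (Suc i)) \<in> D" using edge_fwd[of i] False i len by simp
      then show ?thesis using acyc_2cycle[OF acyc] i len pn[of i] pn[of "Suc i"] by auto
    qed
  qed
  moreover have "hd p = v"
  proof -
    have "p \<noteq> []" using len by auto
    then have "hd p = p ! 0" by (rule hd_conv_nth)
    then show ?thesis using pn[of 0] fg(3) by (simp add: h_def)
  qed
  moreover have "last p = w"
  proof -
    have "p \<noteq> []" using len by auto
    then have "last p = p ! (m + k)" using len by (simp add: last_conv_nth)
    then show ?thesis using pn[of "m + k"] fg(2,4) by (cases "k = 0") (simp_all add: h_def)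
  qed
  ultimately show ?thesis unfolding trek_between_def by blast
qed

lemma trek_iff: assumes ac: "acyclic D" shows "trek_between D v w \<longleftrightarrow> (\<exists>t. (t, v) \<in> D\<^sup>* \<and> (t, w) \<in> D\<^sup>*)"
proof
  assume "trek_between D v w"
  then obtain p where "is_trek D p" "hd p = v" "last p = w" unfolding trek_between_def by blast
  from trek_imp_ca[OF this(1)] this(2,3) show "\<exists>t. (t, v) \<in> D\<^sup>* \<and> (t, w) \<in> D\<^sup>*" by simp
next
  assume "\<exists>t. (t, v) \<in> D\<^sup>* \<and> (t, w) \<in> D\<^sup>*"
  then obtain t where "(t, v) \<in> D\<^sup>*" "(t, w) \<in> D\<^sup>*" by blast
  then show "trek_between D v w" by (rule ca_imp_trek[OF ac])
qed

lemma udg_eq: "acyclic D \<Longrightarrow> udg V D = {{v, w} | v w. v \<in> V \<and> w \<in> V \<and> v \<noteq> w \<and> (\<exists>t. (t, v) \<in> D\<^sup>* \<and> (t, w) \<in> D\<^sup>*)}"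
  unfolding udg_def by (simp add: trek_iff)


lemma cover_graph_mem: "{v, w} \<in> cover_graph C \<longleftrightarrow> v \<noteq> w \<and> (\<exists>A\<in>C. v \<in> A \<and> w \<in> A)"
  unfolding cover_graph_def by (auto simp: doubleton_eq_iff)

lemma mc_union: assumes "minimal_cover S C" shows "\<Union>C = S"
proof -
  have "\<forall>T. T \<subseteq> C \<longrightarrow> (\<Union>T = S \<longleftrightarrow> T = C)" using assms unfolding minimal_cover_def by (rule conjunct2)
  then have "C \<subseteq> C \<longrightarrow> (\<Union>C = S \<longleftrightarrow> C = C)" by (rule spec)
  then show ?thesis by simp
qed

lemma mc_private: assumes "minimal_cover S C" "A \<in> C" shows "\<exists>p\<in>A. \<forall>B\<in>C. p \<in> B \<longrightarrow> B = A"
proof -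
  have "\<forall>T. T \<subseteq> C \<longrightarrow> (\<Union>T = S \<longleftrightarrow> T = C)" using assms(1) unfolding minimal_cover_def by (rule conjunct2)
  then have "C - {A} \<subseteq> C \<longrightarrow> (\<Union>(C - {A}) = S \<longleftrightarrow> C - {A} = C)" by (rule spec)
  then have "\<Union>(C - {A}) \<noteq> S" using assms(2) by auto
  moreover have "\<Union>C = S" using mc_union[OF assms(1)] .
  ultimately obtain x where "x \<in> \<Union>C" "x \<notin> \<Union>(C - {A})" by blast
  then show ?thesis by blast
qed

lemma mc_sub: assumes "minimal_cover S C" "A \<in> C" shows "A \<subseteq> S" "A \<noteq> {}"
proof -
  have "\<forall>A\<in>C. A \<noteq> {} \<and> A \<subseteq> S" using assms(1) unfolding minimal_cover_def by (rule conjunct1)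
  then show "A \<subseteq> S" "A \<noteq> {}" using assms(2) by auto
qed

definition Nb :: "'a set set \<Rightarrow> 'a \<Rightarrow> 'a set" where
  "Nb G v = insert v {w. {v, w} \<in> G}"

definition recov :: "'a set \<Rightarrow> 'a set set \<Rightarrow> 'a set set" where
  "recov S G = {Nb G v | v. v \<in> S \<and> (\<forall>a\<in>Nb G v. \<forall>b\<in>Nb G v. a \<noteq> b \<longrightarrow> {a, b} \<in> G)}"

lemma Nb_mem: assumes "A \<in> C" "v \<in> A" "x \<in> A" shows "x \<in> Nb (cover_graph C) v"
proof (cases "x = v")
  case False
  then have "{v, x} \<in> cover_graph C" using assms unfolding cover_graph_mem by blast
  then show ?thesis unfolding Nb_def by blast
qed (simp add: Nb_def)

lemma Nb_memD: assumes "x \<in> Nb (cover_graph C) v" shows "x = v \<or> (\<exists>B\<in>C. v \<in> B \<and> x \<in> B)"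
proof -
  have "x = v \<or> {v, x} \<in> cover_graph C" using assms unfolding Nb_def by blast
  then show ?thesis unfolding cover_graph_mem by blast
qed

lemma recov_eq: assumes mc: "minimal_cover S C" shows "recov S (cover_graph C) = C"
proof
  let ?G = "cover_graph C"
  have sub: "\<And>A. A \<in> C \<Longrightarrow> A \<subseteq> S" using mc_sub[OF mc] by blast
  show "C \<subseteq> recov S ?G"
  proof
    fix A assume A: "A \<in> C"
    from mc_private[OF mc A] obtain p where p: "p \<in> A" "\<forall>B\<in>C. p \<in> B \<longrightarrow> B = A" ..
    have "Nb ?G p = A"
    proof
      show "Nb ?G p \<subseteq> A"
      proof
        fix x assume "x \<in> Nb ?G p"
        then have "x = p \<or> {p, x} \<in> ?G" unfolding Nb_def by blast
        then show "x \<in> A"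
        proof
          assume "{p, x} \<in> ?G"
          then obtain B where "B \<in> C" "p \<in> B" "x \<in> B" unfolding cover_graph_mem by blast
          then show "x \<in> A" using p(2) by metis
        qed (use p in simp)
      qed
      show "A \<subseteq> Nb ?G p"
      proof
        fix x assume "x \<in> A"
        then have "x = p \<or> {p, x} \<in> ?G" using A p(1) unfolding cover_graph_mem by blast
        then show "x \<in> Nb ?G p" unfolding Nb_def by blast
      qed
    qed
    moreover have "p \<in> S" using sub[OF A] p by blast
    moreover have "\<forall>a\<in>A. \<forall>b\<in>A. a \<noteq> b \<longrightarrow> {a, b} \<in> ?G" using A by (auto simp: cover_graph_mem)
    ultimately show "A \<in> recov S ?G" unfolding recov_def by force
  qed
  show "recov S ?G \<subseteq> C"
  proof
    fix X assume "X \<in> recov S ?G"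
    then obtain v where v: "X = Nb ?G v" "v \<in> S" and cl: "\<forall>a\<in>Nb ?G v. \<forall>b\<in>Nb ?G v. a \<noteq> b \<longrightarrow> {a, b} \<in> ?G"
      unfolding recov_def by blast
    have "v \<in> \<Union>C" using mc_union[OF mc] v(2) by simp
    then obtain B where B: "B \<in> C" "v \<in> B" by blast
    have uniq: "B' = B" if B': "B' \<in> C" "v \<in> B'" for B'
    proof -
      from mc_private[OF mc B(1)] obtain p where p: "p \<in> B" "\<forall>B2\<in>C. p \<in> B2 \<longrightarrow> B2 = B" ..
      from mc_private[OF mc B'(1)] obtain q where q: "q \<in> B'" "\<forall>B2\<in>C. q \<in> B2 \<longrightarrow> B2 = B'" ..
      have pN: "p \<in> Nb ?G v" using Nb_mem[OF B(1) B(2) p(1)] .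
      have qN: "q \<in> Nb ?G v" using Nb_mem[OF B'(1) B'(2) q(1)] .
      show ?thesis
      proof (cases "p = q")
        case True then show ?thesis using p q B' B by metis
      next
        case False
        then have "{p, q} \<in> ?G" using cl pN qN by blast
        then obtain B2 where "B2 \<in> C" "p \<in> B2" "q \<in> B2" unfolding cover_graph_mem by blast
        then show ?thesis using p q by metis
      qed
    qed
    have "Nb ?G v = B"
    proof
      show "B \<subseteq> Nb ?G v" using Nb_mem[OF B(1) B(2)] by blast
      show "Nb ?G v \<subseteq> B"
      proof
        fix w assume "w \<in> Nb ?G v"
        then have "w = v \<or> (\<exists>B'\<in>C. v \<in> B' \<and> w \<in> B')" by (rule Nb_memD)
        then show "w \<in> B" using uniq B by blast
      qed
    qed
    then show "X \<in> C" using v B by simp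
  qed
qed

lemma inj_cover_graph: "inj_on cover_graph {C. minimal_cover S C}"
  by (rule inj_onI) (metis mem_Collect_eq recov_eq)


lemma cover_to_dag:
  assumes mc: "minimal_cover S C"
  shows "\<exists>D. dag_on S D \<and> cover_graph C = udg S D"
proof -
  define pr where "pr A = (SOME p. p \<in> A \<and> (\<forall>B\<in>C. p \<in> B \<longrightarrow> B = A))" for A
  have prp: "pr A \<in> A \<and> (\<forall>B\<in>C. pr A \<in> B \<longrightarrow> B = A)" if "A \<in> C" for A
    unfolding pr_def by (rule someI_ex) (use mc_private[OF mc that] in blast)
  have sub: "\<And>A. A \<in> C \<Longrightarrow> A \<subseteq> S" using mc_sub[OF mc] by blast
  define D where "D = {(pr A, w) | A w. A \<in> C \<and> w \<in> A \<and> w \<noteq> pr A}"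
  have DS: "D \<subseteq> S \<times> S" using sub prp unfolding D_def by blast
  have no2: False if "(x, y) \<in> D" "(y, z) \<in> D" for x y z
  proof -
    from that obtain A A' where "A \<in> C" "y \<in> A" "y \<noteq> pr A" "A' \<in> C" "y = pr A'"
      unfolding D_def by blast
    then show False using prp by metis
  qed
  have "trans D" unfolding trans_def using no2 by blast
  then have tr: "D\<^sup>+ = D" by simp
  have acyc: "acyclic D" unfolding acyclic_def tr by (auto simp: D_def)
  have rt: "D\<^sup>* = D \<union> Id" by (simp add: rtrancl_trancl_reflcl tr)
  have "cover_graph C = udg S D"
  proof -
    have "(v \<noteq> w \<and> (\<exists>A\<in>C. v \<in> A \<and> w \<in> A)) \<longleftrightarrow>
          (v \<in> S \<and> w \<in> S \<and> v \<noteq> w \<and> (\<exists>t. (t, v) \<in> D\<^sup>* \<and> (t, w) \<in> D\<^sup>*))" for v w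
    proof
      assume "v \<noteq> w \<and> (\<exists>A\<in>C. v \<in> A \<and> w \<in> A)"
      then obtain A where A: "A \<in> C" "v \<in> A" "w \<in> A" "v \<noteq> w" by blast
      have "(pr A, v) \<in> D\<^sup>*" "(pr A, w) \<in> D\<^sup>*" using A unfolding rt D_def by auto
      then show "v \<in> S \<and> w \<in> S \<and> v \<noteq> w \<and> (\<exists>t. (t, v) \<in> D\<^sup>* \<and> (t, w) \<in> D\<^sup>*)" using A sub by blast
    next
      assume H: "v \<in> S \<and> w \<in> S \<and> v \<noteq> w \<and> (\<exists>t. (t, v) \<in> D\<^sup>* \<and> (t, w) \<in> D\<^sup>*)"
      then obtain t where t: "(t, v) \<in> D \<union> Id" "(t, w) \<in> D \<union> Id" "v \<noteq> w" unfolding rt by blast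
      show "v \<noteq> w \<and> (\<exists>A\<in>C. v \<in> A \<and> w \<in> A)"
      proof (cases "(t, v) \<in> D")
        case tv: True
        then obtain A where A: "A \<in> C" "t = pr A" "v \<in> A" unfolding D_def by blast
        show ?thesis
        proof (cases "(t, w) \<in> D")
          case True
          then obtain A' where A': "A' \<in> C" "t = pr A'" "w \<in> A'" unfolding D_def by blast
          then have "A' = A" using A prp by metis
          then show ?thesis using A A' t by blast
        next
          case False then have "w = t" using t by auto
          then show ?thesis using A prp t by blast
        qed
      next
        case False
        then have tv: "v = t" using t by auto
        then have "(t, w) \<in> D" using t by auto
        then obtain A where A: "A \<in> C" "t = pr A" "w \<in> A" unfolding D_def by blast
        then show ?thesis using prp tv t by blast
      qed
    qed
    then show ?thesis unfolding udg_eq[OF acyc] cover_graph_def by simp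
  qed
  then show ?thesis using DS acyc unfolding dag_on_def by blast
qed

lemma dag_to_cover:
  assumes fin: "finite S" and dag: "dag_on S D"
  shows "\<exists>C. minimal_cover S C \<and> cover_graph C = udg S D"
proof -
  have DS: "D \<subseteq> S \<times> S" and acyc: "acyclic D" using dag unfolding dag_on_def by auto
  have finD: "finite D" using DS fin by (meson finite_SigmaI rev_finite_subset)
  have wfD: "wf D" by (rule finite_acyclic_wf[OF finD acyc])
  define src where "src = {s \<in> S. \<forall>x. (x, s) \<notin> D}"
  define C where "C = {{v. (s, v) \<in> D\<^sup>*} | s. s \<in> src}"
  have inS: "v \<in> S" if "(s, v) \<in> D\<^sup>*" "s \<in> S" for s v
    using that(1,2) by (induction rule: rtrancl_induct) (use DS in auto)
  have inS2: "t \<in> S" if "(t, v) \<in> D\<^sup>*" "v \<in> S" for t v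
    using that by (induction rule: converse_rtrancl_induct) (use DS in auto)
  have hasrc: "v \<in> S \<longrightarrow> (\<exists>s\<in>src. (s, v) \<in> D\<^sup>*)" for v
    using wfD
  proof (induction v rule: wf_induct_rule)
    case (less v)
    show ?case
    proof (cases "\<exists>x. (x, v) \<in> D")
      case True
      then obtain x where x: "(x, v) \<in> D" by blast
      then have "x \<in> S" using DS by auto
      then obtain s where "s \<in> src" "(s, x) \<in> D\<^sup>*" using less x by blast
      then show ?thesis using x by (meson rtrancl.rtrancl_into_rtrancl)
    next
      case False then show ?thesis unfolding src_def by blast
    qed
  qed
  have srcroot: "t = s" if "s \<in> src" "(t, s) \<in> D\<^sup>*" for s t
    using that(2) by (cases rule: rtranclE) (use that(1) src_def in auto)
  have mc: "minimal_cover S C"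
    unfolding minimal_cover_def
  proof (intro conjI ballI allI impI)
    fix A assume "A \<in> C"
    then obtain s where s: "s \<in> src" "A = {v. (s, v) \<in> D\<^sup>*}" unfolding C_def by blast
    show "A \<noteq> {}" using s by blast
    show "A \<subseteq> S" using s inS src_def by blast
  next
    fix T assume T: "T \<subseteq> C"
    have UC: "\<Union>C = S"
    proof
      show "\<Union>C \<subseteq> S" unfolding C_def using inS src_def by blast
      show "S \<subseteq> \<Union>C" unfolding C_def using hasrc by blast
    qed
    show "\<Union>T = S \<longleftrightarrow> T = C"
    proof
      assume UT: "\<Union>T = S"
      show "T = C"
      proof
        show "C \<subseteq> T"
        proof
          fix A assume "A \<in> C"
          then obtain s where s: "s \<in> src" "A = {v. (s, v) \<in> D\<^sup>*}" unfolding C_def by blast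
          then have "s \<in> \<Union>T" using UT src_def by blast
          then obtain B where B: "B \<in> T" "s \<in> B" by blast
          then obtain s' where s': "B = {v. (s', v) \<in> D\<^sup>*}" using T unfolding C_def by blast
          then have "s' = s" using srcroot[OF s(1)] B by blast
          then show "A \<in> T" using B s s' by simp
        qed
      qed (use T in blast)
    next
      assume "T = C" then show "\<Union>T = S" using UC by simp
    qed
  qed
  have "cover_graph C = udg S D"
  proof -
    have "(v \<noteq> w \<and> (\<exists>A\<in>C. v \<in> A \<and> w \<in> A)) \<longleftrightarrow>
          (v \<in> S \<and> w \<in> S \<and> v \<noteq> w \<and> (\<exists>t. (t, v) \<in> D\<^sup>* \<and> (t, w) \<in> D\<^sup>*))" for v w
    proof
      assume "v \<noteq> w \<and> (\<exists>A\<in>C. v \<in> A \<and> w \<in> A)"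
      then obtain s where s: "s \<in> src" "(s, v) \<in> D\<^sup>*" "(s, w) \<in> D\<^sup>*" "v \<noteq> w" unfolding C_def by blast
      then have "v \<in> S" "w \<in> S" using inS src_def by blast+
      then show "v \<in> S \<and> w \<in> S \<and> v \<noteq> w \<and> (\<exists>t. (t, v) \<in> D\<^sup>* \<and> (t, w) \<in> D\<^sup>*)" using s by blast
    next
      assume "v \<in> S \<and> w \<in> S \<and> v \<noteq> w \<and> (\<exists>t. (t, v) \<in> D\<^sup>* \<and> (t, w) \<in> D\<^sup>*)"
      then obtain t where t: "(t, v) \<in> D\<^sup>*" "(t, w) \<in> D\<^sup>*" "v \<noteq> w" "v \<in> S" by blast
      then have "t \<in> S" using inS2[OF t(1) t(4)] by blast
      then obtain s where "s \<in> src" "(s, t) \<in> D\<^sup>*" using hasrc[of t] by blast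
      note st = this
      have sv: "(s, v) \<in> D\<^sup>*" using st(2) t(1) by (rule rtrancl_trans)
      have sw: "(s, w) \<in> D\<^sup>*" using st(2) t(2) by (rule rtrancl_trans)
      have sc: "{x. (s, x) \<in> D\<^sup>*} \<in> C" using st(1) unfolding C_def by blast
      show "v \<noteq> w \<and> (\<exists>A\<in>C. v \<in> A \<and> w \<in> A)" using t(3) sv sw by (intro conjI bexI[OF _ sc]) simp_all
    qed
    then show ?thesis unfolding udg_eq[OF acyc] cover_graph_def by simp
  qed
  then show ?thesis using mc by blast
qed

theorem proposition2p13:
  fixes n :: nat
  assumes "n \<ge> 1"
  shows "bij_betw cover_graph {C. minimal_cover {1..n} C} {G. UEC_representative n G}"
  unfolding bij_betw_def
proof
  show "inj_on cover_graph {C. minimal_cover {1..n} C}" by (rule inj_cover_graph)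
  show "cover_graph ` {C. minimal_cover {1..n} C} = {G. UEC_representative n G}"
  proof
    show "cover_graph ` {C. minimal_cover {1..n} C} \<subseteq> {G. UEC_representative n G}"
      using cover_to_dag unfolding UEC_representative_def by blast
    show "{G. UEC_representative n G} \<subseteq> cover_graph ` {C. minimal_cover {1..n} C}"
    proof
      fix G assume "G \<in> {G. UEC_representative n G}"
      then obtain D where D: "dag_on {1..n} D" "G = udg {1..n} D" unfolding UEC_representative_def by blast
      obtain C where "minimal_cover {1..n} C" "cover_graph C = udg {1..n} D"
        using dag_to_cover[OF _ D(1)] by blast
      then show "G \<in> cover_graph ` {C. minimal_cover {1..n} C}" using D by blast
    qed
  qed
qed

end
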